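(* Consider the proportional mechanism with $n=2$ agents and total budget $B$ equal to the cost constant $C$ (where $C>0$). For every $\epsilon>0$ there exists a type profile $(q_1,q_2)$ with $0<q_1\le q_2$ such that for every pure Nash equilibrium $(x_1^{\mathrm{prop}},x_2^{\mathrm{prop}})$ of the proportional mechanism and every optimal solution $(f,x_1^*,x_2^* )$ of the reward-design problem (both defined in the context, with these $q_1,q_2$, $B=C$), we have \[\frac{x_1^{\mathrm{prop}}+x_2^{\mathrm{prop}}}{x_1^*+x_2^*}\le \epsilon.\]
   Context: There are $n$ agents; agent $i$ has type $q_i>0$ (the best quality it can produce), with $0<q_1\le\cdots\le q_n$. Agent $i$ chooses a quality $x_i\in[0,q_i]$ and incurs cost $x_iC/q_i$, where $C>0$ is a constant. $B>0$ is the budget. Proportional mechanism: agent $i$'s utility is $u_i(x_i,x_{-i})=\dfrac{x_iB}{\sum_{j=1}^n x_j}-\dfrac{x_iC}{q_i}$, with the convention that $u_i=0$ when all $x_j=0$. A pure Nash equilibrium is a profile $(x_1,\dots,x_n)$ with $x_i\in[0,q_i]$ such that no agent can increase its utility by unilaterally changing $x_i$ within $[0,q_i]$. Reward-design problem: a reward function is a map $f:[0,\infty)\to[0,\infty)$; agent $i$'s utility is $u_i(x)=f(x)-xC/q_i$. A pair $(f,x_1^*,\dots,x_n^* )$ is feasible if for each $i$: $0\le x_i^*\le q_i$ and $u_i(x_i^* )\ge u_i(x)$ for all $x\in[0,q_i]$ (incentive constraint), and $\sum_{i=1}^n f(x_i^* )\le B$ (budget constraint). The problem is to maximize $\sum_{i=1}^n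 x_i^*$ over feasible $(f,x^* )$; an optimal solution is a feasible pair attaining the maximum. *)

theory Defs
  imports Complex_Main
begin

definition prop_utility ::
  "nat \<Rightarrow> (nat \<Rightarrow> real) \<Rightarrow> real \<Rightarrow> real \<Rightarrow> nat \<Rightarrow> (nat \<Rightarrow> real) \<Rightarrow> real" where
  "prop_utility n q B C i x =
     (if (\<forall>j\<in>{1..n}. x j = 0) then 0
      else x i * B / (\<Sum>j=1..n. x j) - x i * C / q i)"

definition prop_pure_NE ::
  "nat \<Rightarrow> (nat \<Rightarrow> real) \<Rightarrow> real \<Rightarrow> real \<Rightarrow> (nat \<Rightarrow> real) \<Rightarrow> bool" where
  "prop_pure_NE n q B C x \<longleftrightarrow>
     (\<forall>i\<in>{1..n}. 0 \<le> x i \<and> x i \<le> q i) \<and>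
     (\<forall>i\<in>{1..n}. \<forall>y. 0 \<le> y \<and> y \<le> q i \<longrightarrow>
        prop_utility n q B C i (x(i := y)) \<le> prop_utility n q B C i x)"

definition rd_feasible ::
  "nat \<Rightarrow> (nat \<Rightarrow> real) \<Rightarrow> real \<Rightarrow> real \<Rightarrow> (real \<Rightarrow> real) \<Rightarrow> (nat \<Rightarrow> real) \<Rightarrow> bool" where
  "rd_feasible n q B C f x \<longleftrightarrow>
     (\<forall>t\<ge>0. f t \<ge> 0) \<and>
     (\<forall>i\<in>{1..n}. 0 \<le> x i \<and> x i \<le> q i \<and>
        (\<forall>t. 0 \<le> t \<and> t \<le> q i \<longrightarrow> f t - t * C / q i \<le> f (x i) - x i * C / q i)) \<and>
     (\<Sum>i=1..n. f (x i)) \<le> B"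

definition rd_optimal ::
  "nat \<Rightarrow> (nat \<Rightarrow> real) \<Rightarrow> real \<Rightarrow> real \<Rightarrow> (real \<Rightarrow> real) \<Rightarrow> (nat \<Rightarrow> real) \<Rightarrow> bool" where
  "rd_optimal n q B C f x \<longleftrightarrow>
     rd_feasible n q B C f x \<and>
     (\<forall>g y. rd_feasible n q B C g y \<longrightarrow> (\<Sum>i=1..n. y i) \<le> (\<Sum>i=1..n. x i))"

end

theory Submission
  imports Defs
begin

lemma sum12: "(\<Sum>j=1..2::nat. (x::nat\<Rightarrow>real) j) = x 1 + x 2"
  by (simp add: numeral_2_eq_2)

lemma all12: "(\<forall>j\<in>{1..2::nat}. P j) \<longleftrightarrow> P 1 \<and> P 2"
  by (auto simp: numeral_2_eq_2 le_Suc_eq)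

lemma ne_bound:
  fixes q :: "nat \<Rightarrow> real" and C :: real
  assumes C: "C > 0" and q1: "q 1 > 0" and q2: "q 2 > 0"
    and ne: "prop_pure_NE 2 q C C xp"
  shows "xp 1 + xp 2 \<le> q 1" "0 \<le> xp 1 + xp 2"
proof -
  have b1: "0 \<le> xp 1" "xp 1 \<le> q 1" "0 \<le> xp 2" "xp 2 \<le> q 2"
    using ne unfolding prop_pure_NE_def all12 by auto
  have dev: "\<And>i y. i \<in> {1,2} \<Longrightarrow> 0 \<le> y \<Longrightarrow> y \<le> q i \<Longrightarrow>
     prop_utility 2 q C C i (xp(i := y)) \<le> prop_utility 2 q C C i xp"
    using ne unfolding prop_pure_NE_def all12 by auto
  show "0 \<le> xp 1 + xp 2" using b1 by simp
  show "xp 1 + xp 2 \<le> q 1"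
  proof (cases "xp 1 > 0")
    case True
    have "prop_utility 2 q C C 1 (xp(1 := 0)) \<le> prop_utility 2 q C C 1 xp"
      using dev[of 1 0] q1 by simp
    moreover have "prop_utility 2 q C C 1 (xp(1 := 0)) = 0"
      unfolding prop_utility_def by simp
    ultimately have "0 \<le> xp 1 * C / (xp 1 + xp 2) - xp 1 * C / q 1"
      using True unfolding prop_utility_def all12 sum12 by auto
    hence h5: "xp 1 * C / q 1 \<le> xp 1 * C / (xp 1 + xp 2)" by simp
    have p: "xp 1 * C > 0" using True C by simp
    have "(xp 1 * C) * (1 / q 1) \<le> (xp 1 * C) * (1 / (xp 1 + xp 2))" using h5 by simp
    hence "1 / q 1 \<le> 1 / (xp 1 + xp 2)" using mult_left_le_imp_le[OF _ p] by blast
    thus ?thesis using True b1 q1 by (simp add: divide_le_eq_1 field_simps)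
  next
    case False
    hence a0: "xp 1 = 0" using b1 by simp
    show ?thesis
    proof (cases "xp 2 > 0")
      case True
      have d: "prop_utility 2 q C C 2 (xp(2 := xp 2 / 2)) \<le> prop_utility 2 q C C 2 xp"
        using dev[of 2 "xp 2 / 2"] b1 True by simp
      have "prop_utility 2 q C C 2 (xp(2 := xp 2 / 2)) = C - xp 2 / 2 * C / q 2"
        unfolding prop_utility_def all12 sum12 using a0 True by simp
      moreover have "prop_utility 2 q C C 2 xp = C - xp 2 * C / q 2"
        unfolding prop_utility_def all12 sum12 using a0 True by simp
      moreover have "xp 2 / 2 * C / q 2 < xp 2 * C / q 2"
        using True C q2 by (simp add: field_simps)
      ultimately show ?thesis using d by simp
    next
      case False
      thus ?thesis using a0 b1 q1 by simp
    qed
  qed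
qed

theorem theorem1:
  fixes C \<epsilon> :: real
  assumes "C > 0" and "\<epsilon> > 0"
  shows "\<exists>q :: nat \<Rightarrow> real. 0 < q 1 \<and> q 1 \<le> q 2 \<and>
           (\<forall>xp. prop_pure_NE 2 q C C xp \<longrightarrow>
              (\<forall>f xs. rd_optimal 2 q C C f xs \<longrightarrow>
                 (xp 1 + xp 2) / (xs 1 + xs 2) \<le> \<epsilon>))"
proof -
  define q :: "nat \<Rightarrow> real" where "q = (\<lambda>i. if i = 1 then min \<epsilon> 1 else 1)"
  have q1: "q 1 = min \<epsilon> 1" and q2: "q 2 = 1" by (simp_all add: q_def)
  have feas: "rd_feasible 2 q C C (\<lambda>t. t * C) (\<lambda>i. if i = 1 then 0 else 1)"
  proof -
    have "\<forall>t. 0 \<le> t \<and> t \<le> q 1 \<longrightarrow> t * C - t * C / q 1 \<le> 0"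
    proof (intro allI impI)
      fix t assume t: "0 \<le> t \<and> t \<le> q 1"
      have "t * C * 1 \<le> t * C * (1 / q 1)"
        using t assms q1 by (intro mult_left_mono) (auto simp: min_def field_simps)
      thus "t * C - t * C / q 1 \<le> 0" by simp
    qed
    thus ?thesis unfolding rd_feasible_def all12 sum12 using assms q1 q2
      by auto
  qed
  show ?thesis
  proof (intro exI[of _ q] conjI allI impI)
    show "0 < q 1" "q 1 \<le> q 2" using q1 q2 assms by auto
    fix xp f xs
    assume ne: "prop_pure_NE 2 q C C xp" and opt: "rd_optimal 2 q C C f xs"
    have s: "1 \<le> xs 1 + xs 2"
      using opt feas unfolding rd_optimal_def sum12 by fastforce
    have a: "xp 1 + xp 2 \<le> q 1" "0 \<le> xp 1 + xp 2"
      using ne_bound[OF assms(1) _ _ ne] q1 q2 assms by auto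
    have "(xp 1 + xp 2) / (xs 1 + xs 2) \<le> (xp 1 + xp 2) / 1"
      using s a by (intro divide_left_mono) auto
    also have "\<dots> \<le> \<epsilon>" using a q1 by simp
    finally show "(xp 1 + xp 2) / (xs 1 + xs 2) \<le> \<epsilon>" .
  qed
qed

end
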